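(* Let $X$ be a random vector in $\mathbb{R}^n$ such that $X\in B$ almost surely, where $B$ is a Borel subset of $\mathbb{R}^n$. Suppose there exist a measurable function $d:B\to\mathbb{R}^m$ and a constant $c>0$ such that $$\|d(x)-d(y)\|\ge c\,\|x-y\|\qquad\forall x,y\in B$$ (for some norms on $\mathbb{R}^m$ and $\mathbb{R}^n$). Then $\mathbb{P}\big(X\in\mathcal{C}_m(X)\big)=1$.
   Context: For a random vector $X$ in $\mathbb{R}^n$ and an integer $m\ge0$, the $m$-dimensional mould $\mathcal{C}_m(X)$ is the set of all $x\in\mathbb{R}^n$ such that $\liminf_{\epsilon\to0^+}\mathbb{P}(\|X-x\|_2<\epsilon)/\epsilon^m>0$. *)

theory Defs
  imports "HOL-Probability.Probability"
begin

text \<open>A norm on a real vector space (the paper allows arbitrary norms on R^n and R^m).\<close>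
definition is_norm :: "('v::real_vector \<Rightarrow> real) \<Rightarrow> bool" where
  "is_norm N \<longleftrightarrow> (\<forall>x. 0 \<le> N x) \<and> (\<forall>x. N x = 0 \<longleftrightarrow> x = 0)
     \<and> (\<forall>a x. N (a *\<^sub>R x) = \<bar>a\<bar> * N x) \<and> (\<forall>x y. N (x + y) \<le> N x + N y)"

definition mould :: "'a measure \<Rightarrow> ('a \<Rightarrow> real^'n) \<Rightarrow> nat \<Rightarrow> (real^'n) set" where
  "mould M X m = {x. Liminf (at_right (0::real))
      (\<lambda>e. ereal (measure M {\<omega> \<in> space M. norm (X \<omega> - x) < e} / e ^ m)) > 0}"

end

theory Submission
  imports Defs
begin

lemma is_norm_sum:
  assumes "is_norm N" "finite S"
  shows "N (sum f S) \<le> (\<Sum>i\<in>S. N (f i))"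
  using assms(2)
proof (induction S rule: finite_induct)
  case empty
  have "N 0 = 0" using assms(1) unfolding is_norm_def by auto
  then show ?case by simp
next
  case (insert x F)
  have "N (sum f (insert x F)) = N (f x + sum f F)" using insert by simp
  also have "\<dots> \<le> N (f x) + N (sum f F)" using assms(1) unfolding is_norm_def by blast
  finally show ?case using insert by simp
qed

lemma is_norm_upper:
  fixes N :: "'a::euclidean_space \<Rightarrow> real"
  assumes "is_norm N"
  shows "\<exists>C>0. \<forall>x. N x \<le> C * norm x"
proof -
  define C where "C = 1 + (\<Sum>b\<in>Basis. N b)"
  have N0: "\<And>x. 0 \<le> N x" using assms unfolding is_norm_def by blast
  have sc: "\<And>a x. N (a *\<^sub>R x) = \<bar>a\<bar> * N x" using assms unfolding is_norm_def by blast
  have Cpos: "C > 0" unfolding C_def using N0 by (simp add: add_pos_nonneg sum_nonneg)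
  have "N x \<le> C * norm x" for x
  proof -
    have "N x = N (\<Sum>b\<in>Basis. (x \<bullet> b) *\<^sub>R b)" by (simp add: euclidean_representation)
    also have "\<dots> \<le> (\<Sum>b\<in>Basis. N ((x \<bullet> b) *\<^sub>R b))" by (rule is_norm_sum[OF assms]) simp
    also have "\<dots> = (\<Sum>b\<in>Basis. \<bar>x \<bullet> b\<bar> * N b)" by (simp add: sc)
    also have "\<dots> \<le> (\<Sum>b\<in>Basis. norm x * N b)"
      by (intro sum_mono mult_right_mono) (auto simp: Basis_le_norm N0)
    also have "\<dots> = norm x * (\<Sum>b\<in>Basis. N b)" by (simp add: sum_distrib_left)
    also have "\<dots> \<le> C * norm x" unfolding C_def by (simp add: algebra_simps)
    finally show ?thesis .
  qed
  then show ?thesis using Cpos by blast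
qed

lemma is_norm_lower:
  fixes N :: "'a::euclidean_space \<Rightarrow> real"
  assumes "is_norm N"
  shows "\<exists>a>0. \<forall>x. a * norm x \<le> N x"
proof -
  obtain C where C: "C > 0" "\<And>x. N x \<le> C * norm x" using is_norm_upper[OF assms] by blast
  have sc: "\<And>a x. N (a *\<^sub>R x) = \<bar>a\<bar> * N x" using assms unfolding is_norm_def by blast
  have tri: "\<And>x y. N (x + y) \<le> N x + N y" using assms unfolding is_norm_def by blast
  have z: "\<And>x. N x = 0 \<longleftrightarrow> x = 0" using assms unfolding is_norm_def by blast
  have N0: "\<And>x. 0 \<le> N x" using assms unfolding is_norm_def by blast
  have neg: "N (y - x) = N (x - y)" for x y
    using sc[of "-1" "x - y"] by simp
  have lip: "\<bar>N x - N y\<bar> \<le> C * norm (x - y)" for x y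
  proof -
    have "N x \<le> N y + N (x - y)" using tri[of y "x - y"] by simp
    moreover have "N y \<le> N x + N (y - x)" using tri[of x "y - x"] by simp
    ultimately show ?thesis using C(2)[of "x - y"] neg[of x y] by linarith
  qed
  have cont: "continuous_on (sphere 0 1) N"
    unfolding continuous_on_iff
  proof (intro ballI allI impI)
    fix x e assume "x \<in> sphere (0::'a) 1" "(0::real) < e"
    show "\<exists>d>0. \<forall>x'\<in>sphere 0 1. dist x' x < d \<longrightarrow> dist (N x') (N x) < e"
    proof (intro exI[of _ "e / C"] conjI ballI impI)
      show "e / C > 0" using \<open>0 < e\<close> C by simp
      fix x' assume "dist x' x < e / C"
      then have "C * norm (x' - x) < e" using C by (simp add: dist_norm field_simps)
      then show "dist (N x') (N x) < e" using lip[of x' x] by (simp add: dist_real_def)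
    qed
  qed
  obtain b :: 'a where b: "b \<in> Basis" using nonempty_Basis by blast
  have ne: "sphere (0::'a) 1 \<noteq> {}" using b by (auto intro!: exI[of _ b])
  obtain x0 where x0: "x0 \<in> sphere 0 1" "\<And>y. y \<in> sphere 0 1 \<Longrightarrow> N x0 \<le> N y"
    using continuous_attains_inf[OF compact_sphere ne cont] by blast
  have apos: "N x0 > 0" using x0(1) z[of x0] N0[of x0] by auto
  have "N x0 * norm x \<le> N x" for x
  proof (cases "x = 0")
    case True then show ?thesis by (simp add: N0)
  next
    case False
    have "(1 / norm x) *\<^sub>R x \<in> sphere 0 1" using False by simp
    then have "N x0 \<le> N ((1 / norm x) *\<^sub>R x)" by (rule x0(2))
    also have "\<dots> = N x / norm x" by (simp add: sc)
    finally show ?thesis using False by (simp add: field_simps)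
  qed
  then show ?thesis using apos by blast
qed

lemma mould_iff:
  "x \<in> mould M X m \<longleftrightarrow>
   (\<exists>a>0. \<exists>\<delta>>0. \<forall>e. 0 < e \<and> e < \<delta> \<longrightarrow>
       a < measure M {\<omega> \<in> space M. norm (X \<omega> - x) < e} / e ^ m)"
  (is "_ \<longleftrightarrow> (\<exists>a>0. \<exists>\<delta>>0. \<forall>e. 0 < e \<and> e < \<delta> \<longrightarrow> a < ?f e)")
proof
  assume "x \<in> mould M X m"
  then have L: "0 < Liminf (at_right 0) (\<lambda>e. ereal (?f e))" unfolding mould_def by simp
  then obtain z where z: "0 < z" "z < Liminf (at_right 0) (\<lambda>e. ereal (?f e))"
    using dense by blast
  have ev: "eventually (\<lambda>e. z < ereal (?f e)) (at_right 0)" using less_LiminfD[OF z(2)] .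
  then obtain b where b: "b > 0" "\<And>e. 0 < e \<Longrightarrow> e < b \<Longrightarrow> z < ereal (?f e)"
    unfolding eventually_at_right_field by auto
  have "z \<noteq> \<infinity>"
  proof
    assume "z = \<infinity>"
    with b(2)[of "b/2"] b(1) show False by simp
  qed
  then obtain a where a: "z = ereal a" using z(1) by (cases z) auto
  show "\<exists>a>0. \<exists>\<delta>>0. \<forall>e. 0 < e \<and> e < \<delta> \<longrightarrow> a < ?f e"
    using a z(1) b by (intro exI[of _ a] conjI exI[of _ b]) auto
next
  assume "\<exists>a>0. \<exists>\<delta>>0. \<forall>e. 0 < e \<and> e < \<delta> \<longrightarrow> a < ?f e"
  then obtain a \<delta> where a: "a > 0" "\<delta> > 0" "\<And>e. 0 < e \<Longrightarrow> e < \<delta> \<Longrightarrow> a < ?f e" by blast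
  have "ereal a \<le> Liminf (at_right 0) (\<lambda>e. ereal (?f e))"
    unfolding le_Liminf_iff
  proof (intro allI impI)
    fix y assume "y < ereal a"
    show "eventually (\<lambda>e. y < ereal (?f e)) (at_right 0)"
      unfolding eventually_at_right_field
      using a \<open>y < ereal a\<close> by (intro exI[of _ \<delta>]) (auto intro: less_trans)
  qed
  moreover have "(0::ereal) < ereal a" using a(1) by simp
  ultimately show "x \<in> mould M X m" unfolding mould_def
    using less_le_trans by blast
qed

lemma dyadic_bracket:
  fixes e :: real
  assumes "0 < e" "e < 1"
  shows "\<exists>i. (1/2)^(Suc i) \<le> e \<and> e < (1/2)^i"
proof -
  obtain n where n: "(1/2::real)^n < e" using real_arch_pow_inv[of e "1/2"] assms by auto
  define P where "P = (\<lambda>n. (1/2::real)^n \<le> e)"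
  define n0 where "n0 = (LEAST n. P n)"
  have Pn: "P n" unfolding P_def using n by simp
  have n0: "P n0" unfolding n0_def by (rule LeastI[of P n, OF Pn])
  have "\<not> P 0" unfolding P_def using assms by simp
  then have "n0 \<noteq> 0" using n0 by metis
  then obtain i where i: "n0 = Suc i" using not0_implies_Suc by blast
  have "i < n0" using i by simp
  then have "\<not> P i" unfolding n0_def by (rule not_less_Least)
  then show ?thesis using n0 i unfolding P_def by (intro exI[of _ i]) simp
qed
lemma g_mono:
  fixes X :: "'a \<Rightarrow> 'b::euclidean_space"
  assumes "finite_measure M" "X \<in> borel_measurable M" "e \<le> e'"
  shows "measure M {\<omega> \<in> space M. norm (X \<omega> - x) < e} \<le> measure M {\<omega> \<in> space M. norm (X \<omega> - x) < e'}"
proof -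
  note [measurable] = assms(2)
  have "{\<omega> \<in> space M. norm (X \<omega> - x) < e'} \<in> sets M" by measurable
  then show ?thesis using assms by (intro finite_measure.finite_measure_mono) auto
qed

lemma g_meas:
  fixes X :: "'a \<Rightarrow> 'b::euclidean_space"
  assumes "finite_measure M" "X \<in> borel_measurable M"
  shows "(\<lambda>x. measure M {\<omega> \<in> space M. norm (X \<omega> - x) < e}) \<in> borel_measurable borel"
proof -
  interpret finite_measure M by fact
  note [measurable] = assms(2)
  define Q where "Q = {p \<in> space (borel \<Otimes>\<^sub>M M). norm (X (snd p) - fst p) < e}"
  have Q: "Q \<in> sets (borel \<Otimes>\<^sub>M M)" unfolding Q_def by measurable
  have eq: "Pair x -` Q = {\<omega> \<in> space M. norm (X \<omega> - x) < e}" for x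
    unfolding Q_def by (auto simp: space_pair_measure)
  have "(\<lambda>x. emeasure M (Pair x -` Q)) \<in> borel_measurable borel"
    by (rule measurable_emeasure_Pair[OF Q])
  then have "(\<lambda>x. enn2real (emeasure M (Pair x -` Q))) \<in> borel_measurable borel"
    by measurable
  then show ?thesis unfolding eq measure_def .
qed

lemma mould_eq:
  fixes X :: "'a \<Rightarrow> real^'n"
  assumes "finite_measure M" "X \<in> borel_measurable M"
  shows "mould M X m = (\<Union>k. \<Union>j. \<Inter>i\<in>{j..}. {x. (1 / real (Suc k)) * ((1/2)^i)^m
            < measure M {\<omega> \<in> space M. norm (X \<omega> - x) < (1/2)^i}})"
    (is "_ = ?R")
proof
  show "mould M X m \<subseteq> ?R"
  proof
    fix x assume "x \<in> mould M X m"
    then obtain a \<delta> where a: "a > 0" "\<delta> > 0"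
      "\<And>e. 0 < e \<Longrightarrow> e < \<delta> \<Longrightarrow> a < measure M {\<omega> \<in> space M. norm (X \<omega> - x) < e} / e ^ m"
      unfolding mould_iff by blast
    obtain k where k: "inverse (real k) < a" "k > 0" using ex_inverse_of_nat_less[OF a(1)] by blast
    obtain j where j: "(1/2::real)^j < \<delta>" using real_arch_pow_inv[of \<delta> "1/2"] a(2) by auto
    have "x \<in> {x. (1 / real (Suc k)) * ((1/2)^i)^m
            < measure M {\<omega> \<in> space M. norm (X \<omega> - x) < (1/2)^i}}" if "i \<ge> j" for i
    proof -
      have "(1/2::real)^i \<le> (1/2)^j" using that by (simp add: power_decreasing)
      then have "(1/2::real)^i < \<delta>" using j by linarith
      then have "a < measure M {\<omega> \<in> space M. norm (X \<omega> - x) < (1/2)^i} / ((1/2)^i)^m"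
        using a(3)[of "(1/2)^i"] j by simp
      then have "a * ((1/2)^i)^m < measure M {\<omega> \<in> space M. norm (X \<omega> - x) < (1/2)^i}"
        by (simp add: field_simps)
      moreover have "(1 / real (Suc k)) \<le> a"
      proof -
        have "inverse (real (Suc k)) \<le> inverse (real k)" using k(2) by (intro le_imp_inverse_le) auto
        then show ?thesis using k(1) by (simp add: divide_inverse)
      qed
      moreover have "(0::real) < ((1/2)^i)^m" by simp
      ultimately have "(1 / real (Suc k)) * ((1/2)^i)^m \<le> a * ((1/2)^i)^m"
        by (intro mult_right_mono) auto
      with \<open>a * ((1/2)^i)^m < _\<close> show ?thesis by simp
    qed
    then show "x \<in> ?R" by blast
  qed
next
  show "?R \<subseteq> mould M X m"
  proof
    fix x assume "x \<in> ?R"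
    then obtain k j where kj: "\<And>i. i \<ge> j \<Longrightarrow> (1 / real (Suc k)) * ((1/2)^i)^m
            < measure M {\<omega> \<in> space M. norm (X \<omega> - x) < (1/2)^i}" by blast
    define a where "a = (1 / real (Suc k)) * (1/2)^m"
    have "a < measure M {\<omega> \<in> space M. norm (X \<omega> - x) < e} / e ^ m"
      if e: "0 < e" "e < (1/2)^j" for e
    proof -
      have "(1/2::real)^j \<le> 1" by (simp add: power_le_one)
      then obtain i where i: "(1/2::real)^(Suc i) \<le> e" "e < (1/2)^i"
        using dyadic_bracket[of e] e by auto
      have "(1/2::real)^(Suc i) < (1/2)^j" using i e by linarith
      then have "j < Suc i" using power_strict_decreasing_iff[of "1/2::real" "Suc i" j] by simp
      then have "Suc i \<ge> j" by simp
      from kj[OF this] have 1: "(1 / real (Suc k)) * ((1/2)^(Suc i))^m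
            < measure M {\<omega> \<in> space M. norm (X \<omega> - x) < e}"
        using g_mono[OF assms, of "(1/2)^(Suc i)" e x] i(1) by linarith
      have eq: "((1/2::real)^(Suc i))^m = (1/2)^m * ((1/2)^i)^m"
        by (simp only: power_Suc power_mult_distrib)
      have "e^m \<le> ((1/2::real)^i)^m" using i e by (intro power_mono) auto
      moreover have "a \<ge> 0" unfolding a_def by simp
      ultimately have "a * e^m \<le> a * ((1/2::real)^i)^m" by (rule mult_left_mono)
      also have "\<dots> = (1 / real (Suc k)) * ((1/2)^(Suc i))^m"
        unfolding a_def eq by (simp only: mult.assoc)
      finally have "a * e^m \<le> (1 / real (Suc k)) * ((1/2)^(Suc i))^m" .
      with 1 have "a * e^m < measure M {\<omega> \<in> space M. norm (X \<omega> - x) < e}" by linarith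
      then show ?thesis using e by (simp add: field_simps)
    qed
    moreover have "a > 0" "(0::real) < (1/2)^j" unfolding a_def by auto
    ultimately show "x \<in> mould M X m" unfolding mould_iff by blast
  qed
qed

lemma mould_borel:
  fixes X :: "'a \<Rightarrow> real^'n"
  assumes "finite_measure M" "X \<in> borel_measurable M"
  shows "mould M X m \<in> sets borel"
proof -
  note [measurable] = g_meas[OF assms]
  show ?thesis unfolding mould_eq[OF assms] by measurable
qed

lemma emeasure_UN_countable_le:
  assumes sets[measurable]: "\<And>i. i \<in> I \<Longrightarrow> A i \<in> sets M" and I: "countable I"
  shows "emeasure M (\<Union>(A ` I)) \<le> (\<integral>\<^sup>+i. emeasure M (A i) \<partial>count_space I)"
proof -
  have ind: "indicator (\<Union>(A ` I)) x \<le> (\<integral>\<^sup>+ i. indicator (A i) x \<partial>count_space I)" for x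
  proof (cases "x \<in> \<Union>(A ` I)")
    case True
    then obtain j where j: "j \<in> I" "x \<in> A j" by auto
    have "(\<integral>\<^sup>+ i. indicator (A i) x * indicator {j} i \<partial>count_space I)
        \<le> (\<integral>\<^sup>+ i. indicator (A i) x \<partial>count_space I)"
      by (intro nn_integral_mono) (auto split: split_indicator)
    moreover have "(\<integral>\<^sup>+ i. indicator (A i) x * indicator {j} i \<partial>count_space I) = (1::ennreal)"
      using j by (subst nn_integral_count_space'[where A="{j}"]) auto
    ultimately show ?thesis using True by simp
  qed simp
  have U: "\<Union>(A ` I) \<in> sets M" using sets I by (intro sets.countable_UN') auto
  have "emeasure M (\<Union>(A ` I)) = (\<integral>\<^sup>+x. indicator (\<Union>(A ` I)) x \<partial>M)"
    using U by simp
  also have "\<dots> \<le> (\<integral>\<^sup>+x. \<integral>\<^sup>+ i. indicator (A i) x \<partial>count_space I \<partial>M)"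
    by (intro nn_integral_mono ind)
  also have "\<dots> = (\<integral>\<^sup>+i. \<integral>\<^sup>+x. indicator (A i) x \<partial>M \<partial>count_space I)"
    using I by (intro nn_integral_count_space_nn_integral) auto
  also have "\<dots> = (\<integral>\<^sup>+i. emeasure M (A i) \<partial>count_space I)"
    by (intro nn_integral_cong) auto
  finally show ?thesis .
qed


lemma vitali_step:
  fixes \<nu> :: "'a::euclidean_space measure"
  assumes fin: "finite_measure \<nu>" and sets: "sets \<nu> = sets borel" and R: "R > 0" and t: "t > 0"
  and F: "F = {y. \<forall>t>0. \<forall>\<delta>>0. \<exists>r. 0 < r \<and> r < \<delta> \<and> measure \<nu> (ball y r) < t * r ^ DIM('a)}"
  shows "\<exists>G\<in>sets borel. F \<inter> ball 0 R \<subseteq> G \<and> emeasure \<nu> G \<le> ennreal (t * 6 ^ DIM('a) * (R + 1) ^ DIM('a))"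
proof -
  define m where "m = DIM('a)"
  define K where "K = F \<inter> ball 0 R"
  define \<kappa> where "\<kappa> = unit_ball_vol (real m)"
  have \<kappa>: "\<kappa> > 0" unfolding \<kappa>_def by simp
  have "\<forall>y\<in>K. \<exists>s. 0 < s \<and> s < 1 \<and> measure \<nu> (ball y s) < t * s ^ m"
    using t unfolding K_def F m_def by auto
  then obtain s where s: "\<And>y. y \<in> K \<Longrightarrow> 0 < s y \<and> s y < 1 \<and> measure \<nu> (ball y (s y)) < t * s y ^ m"
    by metis
  define r where "r y = s y / 6" for y
  have rpos: "\<And>y. y \<in> K \<Longrightarrow> 0 < r y \<and> r y \<le> 1" using s unfolding r_def by fastforce
  have cover: "K \<subseteq> (\<Union>y\<in>K. cball ((\<lambda>y. y) y) (r y))" using rpos by force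
  obtain C where C: "countable C" "C \<subseteq> K"
    "pairwise (\<lambda>i j. disjnt (cball ((\<lambda>y. y) i) (r i)) (cball ((\<lambda>y. y) j) (r j))) C"
    "K \<subseteq> (\<Union>i\<in>C. cball ((\<lambda>y. y) i) (5 * r i))"
    using Vitali_covering_lemma_cballs[OF cover rpos] by blast
  define G where "G = (\<Union>i\<in>C. ball i (s i))"
  have Gb: "G \<in> sets borel" unfolding G_def by (intro borel_open open_UN) auto
  have KG: "K \<subseteq> G"
  proof
    fix y assume "y \<in> K"
    then obtain i where i: "i \<in> C" "y \<in> cball i (5 * r i)" using C(4) by auto
    have "0 < s i" using s[of i] i C(2) by auto
    then have "5 * r i < s i" unfolding r_def by simp
    then show "y \<in> G" using i unfolding G_def by force
  qed
  define c0 where "c0 = t * 6 ^ m / \<kappa>"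
  have bd: "emeasure \<nu> (ball i (s i)) \<le> ennreal c0 * emeasure lborel (cball i (r i))" if "i \<in> C" for i
  proof -
    have iK: "i \<in> K" using that C(2) by auto
    have "emeasure \<nu> (ball i (s i)) = ennreal (measure \<nu> (ball i (s i)))"
      using fin by (simp add: finite_measure.emeasure_eq_measure)
    also have "\<dots> \<le> ennreal (t * s i ^ m)" using s[OF iK] by (intro ennreal_leI) auto
    also have "t * s i ^ m = c0 * (\<kappa> * r i ^ m)"
      unfolding c0_def r_def using \<kappa> by (simp add: field_simps power_divide)
    also have "ennreal (c0 * (\<kappa> * r i ^ m)) = ennreal c0 * emeasure lborel (cball i (r i))"
    proof -
      have "r i \<ge> 0" using rpos[OF iK] by simp
      then have "emeasure lborel (cball i (r i)) = ennreal (\<kappa> * r i ^ m)"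
        unfolding \<kappa>_def m_def by (rule emeasure_cball)
      moreover have "c0 \<ge> 0" unfolding c0_def using \<kappa> t by simp
      moreover have "\<kappa> * r i ^ m \<ge> 0" using \<kappa> \<open>r i \<ge> 0\<close> by simp
      ultimately show ?thesis using ennreal_mult by metis
    qed
    finally show ?thesis .
  qed
  have "emeasure \<nu> G \<le> (\<integral>\<^sup>+i. emeasure \<nu> (ball i (s i)) \<partial>count_space C)"
    unfolding G_def using C(1) sets by (intro emeasure_UN_countable_le) auto
  also have "\<dots> \<le> (\<integral>\<^sup>+i. ennreal c0 * emeasure lborel (cball i (r i)) \<partial>count_space C)"
    using bd by (intro nn_integral_mono) auto
  also have "\<dots> = ennreal c0 * (\<integral>\<^sup>+i. emeasure lborel (cball i (r i)) \<partial>count_space C)"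
    by (rule nn_integral_cmult) auto
  also have "(\<integral>\<^sup>+i. emeasure lborel (cball i (r i)) \<partial>count_space C) = emeasure lborel (\<Union>i\<in>C. cball i (r i))"
    using C(1,3) by (intro emeasure_UN_countable[symmetric]) (auto simp: disjoint_family_on_def pairwise_def disjnt_def)
  also have "emeasure lborel (\<Union>i\<in>C. cball i (r i)) \<le> emeasure lborel (cball (0::'a) (R + 1))"
  proof (intro emeasure_mono)
    show "(\<Union>i\<in>C. cball i (r i)) \<subseteq> cball 0 (R + 1)"
    proof
      fix y assume "y \<in> (\<Union>i\<in>C. cball i (r i))"
      then obtain i where i: "i \<in> C" "dist i y \<le> r i" by auto
      have "i \<in> K" using i C(2) by auto
      then have "norm i < R" "r i \<le> 1" using rpos unfolding K_def by auto
      then show "y \<in> cball 0 (R + 1)" using i norm_triangle_ineq[of i "y - i"]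
        by (auto simp: dist_norm norm_minus_commute)
    qed
  qed auto
  also have "emeasure lborel (cball (0::'a) (R + 1)) = ennreal (\<kappa> * (R + 1) ^ m)"
    unfolding \<kappa>_def m_def using R by (intro emeasure_cball) simp
  also have "ennreal c0 * ennreal (\<kappa> * (R + 1) ^ m) = ennreal (t * 6 ^ m * (R + 1) ^ m)"
    using \<kappa> t R unfolding c0_def by (simp add: ennreal_mult[symmetric])
  finally have "emeasure \<nu> G \<le> ennreal (t * 6 ^ DIM('a) * (R + 1) ^ DIM('a))"
    unfolding m_def by (simp add: mult_left_mono)
  then show ?thesis using Gb KG unfolding K_def by blast
qed


lemma density_null:
  fixes \<nu> :: "'a::euclidean_space measure"
  assumes fin: "finite_measure \<nu>" and sets: "sets \<nu> = sets borel"
  shows "\<exists>H\<in>sets borel. {y. \<forall>t>0. \<forall>\<delta>>0. \<exists>r. 0 < r \<and> r < \<delta> \<and> measure \<nu> (ball y r) < t * r ^ DIM('a)} \<subseteq> H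
           \<and> emeasure \<nu> H = 0"
proof -
  define F where "F = {y. \<forall>t>0. \<forall>\<delta>>0. \<exists>r. 0 < r \<and> r < \<delta> \<and> measure \<nu> (ball y r) < t * r ^ DIM('a)}"
  define Kn where "Kn n = 6 ^ DIM('a) * (real (Suc n) + 1) ^ DIM('a)" for n
  have "\<forall>n j. \<exists>G\<in>sets borel. F \<inter> ball 0 (real (Suc n)) \<subseteq> G \<and>
      emeasure \<nu> G \<le> ennreal (inverse (real (Suc j)) * Kn n)"
  proof (intro allI)
    fix n j
    from vitali_step[OF fin sets, of "real (Suc n)" "inverse (real (Suc j))" F] F_def
    show "\<exists>G\<in>sets borel. F \<inter> ball 0 (real (Suc n)) \<subseteq> G \<and>
      emeasure \<nu> G \<le> ennreal (inverse (real (Suc j)) * Kn n)"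
      unfolding Kn_def by (simp add: mult.assoc)
  qed
  then obtain G where G: "\<And>n j. G n j \<in> sets borel" "\<And>n j. F \<inter> ball 0 (real (Suc n)) \<subseteq> G n j"
      "\<And>n j. emeasure \<nu> (G n j) \<le> ennreal (inverse (real (Suc j)) * Kn n)"
    by metis
  note [measurable] = G(1)
  define H where "H = (\<Union>n. \<Inter>j. G n j)"
  have Hb: "H \<in> sets borel" unfolding H_def by measurable
  have null: "(\<Inter>j. G n j) \<in> null_sets \<nu>" for n
  proof -
    have In: "(\<Inter>j. G n j) \<in> sets \<nu>" unfolding sets by measurable
    have le: "measure \<nu> (\<Inter>j. G n j) \<le> inverse (real (Suc j)) * Kn n" for j
    proof -
      have "emeasure \<nu> (\<Inter>j. G n j) \<le> emeasure \<nu> (G n j)"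
        using G(1) sets by (intro emeasure_mono) auto
      also have "\<dots> \<le> ennreal (inverse (real (Suc j)) * Kn n)" by (rule G(3))
      finally show ?thesis using fin
        by (simp add: finite_measure.emeasure_eq_measure Kn_def ennreal_le_iff)
    qed
    have lim: "(\<lambda>j. inverse (real (Suc j)) * Kn n) \<longlonglongrightarrow> 0 * Kn n"
      by (intro tendsto_mult LIMSEQ_inverse_real_of_nat tendsto_const)
    have "measure \<nu> (\<Inter>j. G n j) \<le> 0"
      using LIMSEQ_le_const[OF lim, of "measure \<nu> (\<Inter>j. G n j)"] le by auto
    then have "measure \<nu> (\<Inter>j. G n j) = 0" by (simp add: measure_nonneg antisym)
    then have "emeasure \<nu> (\<Inter>j. G n j) = 0" using fin by (simp add: finite_measure.emeasure_eq_measure)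
    then show ?thesis using In by auto
  qed
  have "H \<in> null_sets \<nu>" unfolding H_def by (intro null_sets_UN null)
  then have H0: "emeasure \<nu> H = 0" by auto
  have "F \<subseteq> H"
  proof
    fix y assume y: "y \<in> F"
    obtain n where n: "norm y < real n" using reals_Archimedean2 by blast
    then have "y \<in> ball 0 (real (Suc n))" by (simp add: dist_norm)
    then show "y \<in> H" using G(2) y unfolding H_def by blast
  qed
  then show ?thesis using Hb H0 unfolding F_def by blast
qed

theorem mainTheorem7:
  fixes M :: "'a measure" and X :: "'a \<Rightarrow> real^'n" and B :: "(real^'n) set"
    and d :: "real^'n \<Rightarrow> real^'k" and c :: real and m :: nat
    and Nn :: "real^'n \<Rightarrow> real" and Nm :: "real^'k \<Rightarrow> real"
  assumes "prob_space M"
    and "X \<in> borel_measurable M"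
    and "B \<in> sets borel"
    and "AE \<omega> in M. X \<omega> \<in> B"
    and "CARD('k) = m"
    and "d \<in> borel_measurable (restrict_space borel B)"
    and "c > 0"
    and "is_norm Nn" and "is_norm Nm"
    and "\<forall>x\<in>B. \<forall>y\<in>B. Nm (d x - d y) \<ge> c * Nn (x - y)"
  shows "measure M {\<omega> \<in> space M. X \<omega> \<in> mould M X m} = 1"
proof -
  interpret P: prob_space M by fact
  note Xm[measurable] = assms(2)
  have finM: "finite_measure M" by unfold_locales
  obtain an where an: "an > 0" "\<And>x. an * norm x \<le> Nn x" using is_norm_lower[OF assms(8)] by blast
  obtain Cm where Cm: "Cm > 0" "\<And>y. Nm y \<le> Cm * norm y" using is_norm_upper[OF assms(9)] by blast
  define L where "L = Cm / (c * an)"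
  have Lpos: "L > 0" unfolding L_def using an Cm assms(7) by simp
  have Lip: "norm (x - y) \<le> L * norm (d x - d y)" if "x \<in> B" "y \<in> B" for x y
  proof -
    have "c * (an * norm (x - y)) \<le> c * Nn (x - y)" using an(2) assms(7) by (intro mult_left_mono) auto
    also have "\<dots> \<le> Nm (d x - d y)" using assms(10) that by auto
    also have "\<dots> \<le> Cm * norm (d x - d y)" by (rule Cm(2))
    finally have "(c * an) * norm (x - y) \<le> Cm * norm (d x - d y)" by (simp add: mult.assoc)
    then show ?thesis unfolding L_def using an assms(7) by (simp add: field_simps)
  qed
  define Y where "Y \<omega> = (if X \<omega> \<in> B then d (X \<omega>) else 0)" for \<omega>
  have dm: "(\<lambda>x. if x \<in> B then d x else 0) \<in> borel_measurable borel"
    using measurable_restrict_space_iff[of B borel 0 borel d] assms(3,6) by simp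
  have Ym[measurable]: "Y \<in> borel_measurable M"
    unfolding Y_def using measurable_compose[OF Xm dm] by simp
  define \<nu> where "\<nu> = distr M borel Y"
  interpret Q: prob_space \<nu> unfolding \<nu>_def by (rule P.prob_space_distr) simp
  have fin\<nu>: "finite_measure \<nu>" by unfold_locales
  have sets\<nu>: "sets \<nu> = sets borel" unfolding \<nu>_def by simp
  obtain H where H: "H \<in> sets borel"
    "{y. \<forall>t>0. \<forall>\<delta>>0. \<exists>r. 0 < r \<and> r < \<delta> \<and> measure \<nu> (ball y r) < t * r ^ DIM(real^'k)} \<subseteq> H"
    "emeasure \<nu> H = 0"
    using density_null[OF fin\<nu> sets\<nu>] by blast
  have dimk: "DIM(real^'k) = m" using assms(5) by simp
  have key: "d x \<in> H" if x: "x \<in> B" "x \<notin> mould M X m" for x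
  proof -
    have nm: "\<forall>a>0. \<forall>\<delta>>0. \<exists>e. 0 < e \<and> e < \<delta> \<and>
        measure M {\<omega> \<in> space M. norm (X \<omega> - x) < e} / e ^ m \<le> a"
    proof (intro allI impI)
      fix a \<delta> :: real assume "a > 0" "\<delta> > 0"
      show "\<exists>e. 0 < e \<and> e < \<delta> \<and> measure M {\<omega> \<in> space M. norm (X \<omega> - x) < e} / e ^ m \<le> a"
      proof (rule ccontr)
        assume "\<not> ?thesis"
        then have "\<forall>e. 0 < e \<and> e < \<delta> \<longrightarrow> a < measure M {\<omega> \<in> space M. norm (X \<omega> - x) < e} / e ^ m"
          by (auto simp: not_le)
        then have "x \<in> mould M X m" unfolding mould_iff using \<open>a > 0\<close> \<open>\<delta> > 0\<close> by blast
        then show False using x(2) by simp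
      qed
    qed
    have "\<exists>r. 0 < r \<and> r < \<delta> \<and> measure \<nu> (ball (d x) r) < t * r ^ m" if t: "t > 0" and \<delta>: "\<delta> > 0" for t \<delta>
    proof -
      define a where "a = t / (2 * L ^ m)"
      have apos: "a > 0" unfolding a_def using t Lpos by simp
      obtain e where e: "0 < e" "e < L * \<delta>"
        "measure M {\<omega> \<in> space M. norm (X \<omega> - x) < e} / e ^ m \<le> a"
      proof -
        have "L * \<delta> > 0" using \<delta> Lpos by simp
        then show ?thesis using nm apos that by blast
      qed
      define r where "r = e / L"
      have r: "0 < r" "r < \<delta>" unfolding r_def using e Lpos by (auto simp: field_simps)
      have eL: "e = L * r" unfolding r_def using Lpos by simp
      have g: "measure M {\<omega> \<in> space M. norm (X \<omega> - x) < e} \<le> a * e ^ m"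
        using e by (simp add: field_simps)
      have "measure \<nu> (ball (d x) r) = measure M (Y -` ball (d x) r \<inter> space M)"
        unfolding \<nu>_def by (rule measure_distr) auto
      also have "\<dots> \<le> measure M {\<omega> \<in> space M. norm (X \<omega> - x) < e}"
      proof -
        have "AE \<omega> in M. \<omega> \<in> Y -` ball (d x) r \<inter> space M \<longrightarrow> \<omega> \<in> {\<omega> \<in> space M. norm (X \<omega> - x) < e}"
          using assms(4)
        proof eventually_elim
          case (elim \<omega>)
          show ?case
          proof
            assume "\<omega> \<in> Y -` ball (d x) r \<inter> space M"
            then have "norm (d (X \<omega>) - d x) < r" "\<omega> \<in> space M"
              using elim unfolding Y_def by (auto simp: dist_norm norm_minus_commute)
            moreover have "norm (X \<omega> - x) \<le> L * norm (d (X \<omega>) - d x)" using Lip elim x(1) by blast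
            moreover have "L * norm (d (X \<omega>) - d x) < L * r"
              using Lpos \<open>norm (d (X \<omega>) - d x) < r\<close> by simp
            ultimately show "\<omega> \<in> {\<omega> \<in> space M. norm (X \<omega> - x) < e}"
              using eL by simp
          qed
        qed
        then have "emeasure M (Y -` ball (d x) r \<inter> space M) \<le> emeasure M {\<omega> \<in> space M. norm (X \<omega> - x) < e}"
          by (rule emeasure_mono_AE) measurable
        then show ?thesis by (simp add: P.emeasure_eq_measure)
      qed
      also have "\<dots> \<le> a * e ^ m" by (rule g)
      also have "a * e ^ m = t / 2 * r ^ m" unfolding a_def eL using Lpos by (simp add: power_mult_distrib)
      also have "\<dots> < t * r ^ m" using t r by simp
      finally show ?thesis using r by blast
    qed
    then show ?thesis using H(2) unfolding dimk by blast
  qed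
  have null: "Y -` H \<inter> space M \<in> null_sets M"
  proof -
    have "emeasure M (Y -` H \<inter> space M) = emeasure \<nu> H"
      unfolding \<nu>_def using H(1) by (simp add: emeasure_distr)
    then show ?thesis using H(3) H(1) by (auto intro: measurable_sets[OF Ym])
  qed
  have AEH: "AE \<omega> in M. Y \<omega> \<notin> H"
    by (rule AE_I'[OF null]) auto
  have AEm: "AE \<omega> in M. X \<omega> \<in> mould M X m"
    using AEH assms(4)
  proof eventually_elim
    case (elim \<omega>)
    show ?case
    proof (rule ccontr)
      assume "X \<omega> \<notin> mould M X m"
      then have "d (X \<omega>) \<in> H" using key elim by blast
      then show False using elim unfolding Y_def by simp
    qed
  qed
  have [measurable]: "mould M X m \<in> sets borel" by (rule mould_borel[OF finM Xm])
  have "{\<omega> \<in> space M. X \<omega> \<in> mould M X m} \<in> sets M" by measurable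
  from P.prob_Collect_eq_1[OF this] AEm show ?thesis by simp
qed

end
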